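(* Let $G$ be a finite abelian group, $\Phi$ a normalized $3$-cocycle on $G$, and $V=\bigoplus_{i=1}^nV_i$ an object of ${}^{\mathbbm{k}G}_{\mathbbm{k}G}\mathcal{YD}^{\Phi}$ with each $V_i$ simple. Let $H=G_V$. If $\Phi|_H$ is not an abelian $3$-cocycle on $H$, then $n\ge3$ and at least three of the summands $V_i$ are not of diagonal type.
   Context: $\mathbbm{k}$ is algebraically closed of characteristic zero. For a finite abelian group $K$, a normalized 3-cocycle $\Phi$ and $g\in K$, $\widetilde{\Phi}_g(x,y)=\frac{\Phi(g,x,y)\Phi(x,y,g)}{\Phi(x,g,y)}$. The category ${}^{\mathbbm{k}K}_{\mathbbm{k}K}\mathcal{YD}^{\Phi}$ has objects the $K$-graded spaces $V=\bigoplus_gV_g$ with operators $e\triangleright-$ preserving each $V_g$, $1\triangleright v=v$, $e\triangleright(f\triangleright v)=\widetilde{\Phi}_g(e,f)(ef)\triangleright v$ for $v\in V_g$ (with tensor product of degree $gh$ and action $e\triangleright(X\otimes Y)=\widetilde{\Phi}_e(g,h)(e\triangleright X)\otimes(e\triangleright Y)$). A simple object $V$ is concentrated in a single degree $g_V$; the support group $G_V$ of $V=\bigoplus_iV_i$ ($V_i$ simple) is the subgroup generated by the $g_{V_i}$. An object is of diagonal type if it is a direct sum of $1$-dimensional objects. A 3-cocycle $\Psi$ on $K$ is abelian if every simple object of ${}^{\mathbbm{k}K}_{\mathbbm{k}K}\mathcal{YD}^{\Psi}$ is $1$-dimensional. *)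

theory Defs
  imports "Jordan_Normal_Form.Determinant" "HOL-Algebra.Generated_Groups"
    "HOL-Computational_Algebra.Polynomial"
begin

text \<open>The ground field is algebraically closed (characteristic zero is imposed by the
  type class field_char_0 in the theorem).\<close>
definition alg_closed :: "'k::field itself \<Rightarrow> bool" where
  "alg_closed _ \<longleftrightarrow> (\<forall>p :: 'k poly. degree p \<ge> 1 \<longrightarrow> (\<exists>x. poly p x = 0))"

definition normalized_3cocycle :: "('g, 'z) monoid_scheme \<Rightarrow> ('g \<Rightarrow> 'g \<Rightarrow> 'g \<Rightarrow> 'k::field) \<Rightarrow> bool" where
  "normalized_3cocycle K \<Phi> \<longleftrightarrow>
     (\<forall>a\<in>carrier K. \<forall>b\<in>carrier K. \<forall>c\<in>carrier K. \<Phi> a b c \<noteq> 0) \<and>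
     (\<forall>a\<in>carrier K. \<forall>b\<in>carrier K. \<forall>c\<in>carrier K. \<forall>d\<in>carrier K.
        \<Phi> b c d * \<Phi> a (b \<otimes>\<^bsub>K\<^esub> c) d * \<Phi> a b c
          = \<Phi> (a \<otimes>\<^bsub>K\<^esub> b) c d * \<Phi> a b (c \<otimes>\<^bsub>K\<^esub> d)) \<and>
     (\<forall>a\<in>carrier K. \<forall>b\<in>carrier K.
        \<Phi> \<one>\<^bsub>K\<^esub> a b = 1 \<and> \<Phi> a \<one>\<^bsub>K\<^esub> b = 1 \<and> \<Phi> a b \<one>\<^bsub>K\<^esub> = 1)"

definition Phi_tilde :: "('g \<Rightarrow> 'g \<Rightarrow> 'g \<Rightarrow> 'k::field) \<Rightarrow> 'g \<Rightarrow> 'g \<Rightarrow> 'g \<Rightarrow> 'k" where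
  "Phi_tilde \<Phi> g x y = \<Phi> g x y * \<Phi> x y g / \<Phi> x g y"

text \<open>An object of YD^\<Phi> over kK concentrated in the single degree g, of (finite) dimension d,
  realised on k^d; rho e is the matrix of the operator e \<triangleright> -.\<close>
definition homog_obj :: "('g, 'z) monoid_scheme \<Rightarrow> ('g \<Rightarrow> 'g \<Rightarrow> 'g \<Rightarrow> 'k::field) \<Rightarrow> 'g \<Rightarrow> nat \<Rightarrow> ('g \<Rightarrow> 'k mat) \<Rightarrow> bool" where
  "homog_obj K \<Phi> g d \<rho> \<longleftrightarrow> g \<in> carrier K \<and>
     (\<forall>e\<in>carrier K. \<rho> e \<in> carrier_mat d d) \<and>
     \<rho> \<one>\<^bsub>K\<^esub> = 1\<^sub>m d \<and>
     (\<forall>e\<in>carrier K. \<forall>f\<in>carrier K. \<rho> e * \<rho> f = Phi_tilde \<Phi> g e f \<cdot>\<^sub>m \<rho> (e \<otimes>\<^bsub>K\<^esub> f))"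

definition invariant_subspace :: "('g, 'z) monoid_scheme \<Rightarrow> nat \<Rightarrow> ('g \<Rightarrow> 'k::field mat) \<Rightarrow> 'k vec set \<Rightarrow> bool" where
  "invariant_subspace K d \<rho> W \<longleftrightarrow> W \<subseteq> carrier_vec d \<and> 0\<^sub>v d \<in> W \<and>
     (\<forall>v\<in>W. \<forall>w\<in>W. v + w \<in> W) \<and> (\<forall>c. \<forall>v\<in>W. c \<cdot>\<^sub>v v \<in> W) \<and>
     (\<forall>e\<in>carrier K. \<forall>v\<in>W. \<rho> e *\<^sub>v v \<in> W)"

definition simple_obj :: "('g, 'z) monoid_scheme \<Rightarrow> ('g \<Rightarrow> 'g \<Rightarrow> 'g \<Rightarrow> 'k::field) \<Rightarrow> 'g \<Rightarrow> nat \<Rightarrow> ('g \<Rightarrow> 'k mat) \<Rightarrow> bool" where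
  "simple_obj K \<Phi> g d \<rho> \<longleftrightarrow> homog_obj K \<Phi> g d \<rho> \<and> d \<noteq> 0 \<and>
     (\<forall>W. invariant_subspace K d \<rho> W \<longrightarrow> W = {0\<^sub>v d} \<or> W = carrier_vec d)"

text \<open>Diagonal type: direct sum of 1-dimensional subobjects, i.e. there is a basis of k^d
  each of whose lines is stable under all operators.\<close>
definition diagonal_type :: "('g, 'z) monoid_scheme \<Rightarrow> nat \<Rightarrow> ('g \<Rightarrow> 'k::field mat) \<Rightarrow> bool" where
  "diagonal_type K d \<rho> \<longleftrightarrow> (\<exists>vs. length vs = d \<and> set vs \<subseteq> carrier_vec d \<and>
     det (mat_of_cols d vs) \<noteq> 0 \<and>
     (\<forall>v\<in>set vs. \<forall>e\<in>carrier K. \<exists>c. \<rho> e *\<^sub>v v = c \<cdot>\<^sub>v v))"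

text \<open>Abelian 3-cocycle: every simple object of YD^\<Psi> over kK is 1-dimensional
  (simple objects are concentrated in a single degree).\<close>
definition abelian_3cocycle :: "('g, 'z) monoid_scheme \<Rightarrow> ('g \<Rightarrow> 'g \<Rightarrow> 'g \<Rightarrow> 'k::field) \<Rightarrow> bool" where
  "abelian_3cocycle K \<Psi> \<longleftrightarrow>
     (\<forall>g d (\<rho> :: 'g \<Rightarrow> 'k mat). simple_obj K \<Psi> g d \<rho> \<longrightarrow> d = 1)"

end

theory Submission
  imports Defs "Jordan_Normal_Form.Char_Poly"
begin

lemma scalar_line:
  fixes v :: "'k::field vec"
  assumes "v \<in> carrier_vec n" "v \<noteq> 0\<^sub>v n" "a \<cdot>\<^sub>v v = b \<cdot>\<^sub>v v" shows "a = b"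
proof -
  have "\<exists>j<n. v $ j \<noteq> 0"
  proof (rule ccontr)
    assume "\<not> ?thesis"
    then have "\<forall>j<n. v $ j = 0" by blast
    then have "v = 0\<^sub>v n" using assms(1) by (intro eq_vecI) auto
    then show False using assms(2) by simp
  qed
  then obtain j where j: "j < n" "v $ j \<noteq> 0" by blast
  have "(a \<cdot>\<^sub>v v) $ j = (b \<cdot>\<^sub>v v) $ j" using assms(3) by simp
  then have "a * v $ j = b * v $ j" using j assms(1) by simp
  then show ?thesis using j(2) by simp
qed

lemma eigen_exists:
  fixes A :: "'k::field mat"
  assumes ac: "alg_closed TYPE('k)" and A: "A \<in> carrier_mat d d" and d: "d \<noteq> 0"
  shows "\<exists>k v. v \<in> carrier_vec d \<and> v \<noteq> 0\<^sub>v d \<and> A *\<^sub>v v = k \<cdot>\<^sub>v v"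
proof -
  have "degree (char_poly A) = d" using degree_monic_char_poly[OF A] by simp
  then obtain k where "poly (char_poly A) k = 0" using ac d unfolding alg_closed_def by force
  then have "eigenvalue A k" using eigenvalue_root_char_poly[OF A] by simp
  then obtain v where "eigenvector A v k" unfolding eigenvalue_def by blast
  then show ?thesis unfolding eigenvector_def using A by auto
qed

lemma LA:
  fixes \<rho> :: "'g \<Rightarrow> 'k::field mat"
  assumes ac: "alg_closed TYPE('k)" and S: "simple_obj K \<Phi> g d \<rho>"
    and comm: "\<forall>e\<in>carrier K. \<forall>f\<in>carrier K. \<rho> e * \<rho> f = \<rho> f * \<rho> e"
  shows "d = 1"
proof -
  have d: "d \<noteq> 0" using S unfolding simple_obj_def by simp
  have car: "\<And>e. e \<in> carrier K \<Longrightarrow> \<rho> e \<in> carrier_mat d d"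
    using S unfolding simple_obj_def homog_obj_def by blast
  have simp_inv: "\<And>W. invariant_subspace K d \<rho> W \<Longrightarrow> W = {0\<^sub>v d} \<or> W = carrier_vec d"
    using S unfolding simple_obj_def by blast
  have scal: "\<exists>k. \<forall>w\<in>carrier_vec d. \<rho> e *\<^sub>v w = k \<cdot>\<^sub>v w" if e: "e \<in> carrier K" for e
  proof -
    obtain k v where v: "v \<in> carrier_vec d" "v \<noteq> 0\<^sub>v d" "\<rho> e *\<^sub>v v = k \<cdot>\<^sub>v v"
      using eigen_exists[OF ac car[OF e] d] by blast
    define W where "W = {w \<in> carrier_vec d. \<rho> e *\<^sub>v w = k \<cdot>\<^sub>v w}"
    have "invariant_subspace K d \<rho> W"
      unfolding invariant_subspace_def
    proof (intro conjI ballI allI)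
      show "W \<subseteq> carrier_vec d" unfolding W_def by auto
      show "0\<^sub>v d \<in> W" unfolding W_def using car[OF e] by auto
    next
      fix v w assume "v \<in> W" "w \<in> W"
      then show "v + w \<in> W" unfolding W_def using car[OF e]
        by (auto simp: mult_add_distrib_mat_vec smult_add_distrib_vec)
    next
      fix c v assume "v \<in> W"
      then show "c \<cdot>\<^sub>v v \<in> W" unfolding W_def using car[OF e]
        by (auto simp: mult_mat_vec smult_smult_assoc mult.commute)
    next
      fix f v assume f: "f \<in> carrier K" and "v \<in> W"
      then have vc: "v \<in> carrier_vec d" and ev: "\<rho> e *\<^sub>v v = k \<cdot>\<^sub>v v" unfolding W_def by auto
      have "\<rho> e *\<^sub>v (\<rho> f *\<^sub>v v) = (\<rho> e * \<rho> f) *\<^sub>v v" using car[OF e] car[OF f] vc by simp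
      also have "\<dots> = (\<rho> f * \<rho> e) *\<^sub>v v" using comm e f by simp
      also have "\<dots> = \<rho> f *\<^sub>v (k \<cdot>\<^sub>v v)" using car[OF e] car[OF f] vc ev by simp
      also have "\<dots> = k \<cdot>\<^sub>v (\<rho> f *\<^sub>v v)" using car[OF f] vc by (simp add: mult_mat_vec)
      finally show "\<rho> f *\<^sub>v v \<in> W" unfolding W_def using car[OF f] vc by auto
    qed
    then have "W = {0\<^sub>v d} \<or> W = carrier_vec d" by (rule simp_inv)
    moreover have "v \<in> W" unfolding W_def using v by auto
    ultimately have "W = carrier_vec d" using v(2) by auto
    then show ?thesis unfolding W_def by auto
  qed
  define u :: "'k vec" where "u = unit_vec d 0"
  define L where "L = {c \<cdot>\<^sub>v u | c. True}"
  have uc: "u \<in> carrier_vec d" unfolding u_def by simp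
  have "invariant_subspace K d \<rho> L"
    unfolding invariant_subspace_def
  proof (intro conjI ballI allI)
    show "L \<subseteq> carrier_vec d" unfolding L_def using uc by auto
    show "0\<^sub>v d \<in> L" unfolding L_def using uc by (auto intro!: exI[of _ 0])
  next
    fix v w assume "v \<in> L" "w \<in> L"
    then show "v + w \<in> L" unfolding L_def using uc
      by (auto simp: add_smult_distrib_vec[symmetric])
  next
    fix c v assume "v \<in> L"
    then show "c \<cdot>\<^sub>v v \<in> L" unfolding L_def using uc
      by (auto simp: smult_smult_assoc)
  next
    fix f v assume f: "f \<in> carrier K" and "v \<in> L"
    then obtain c where c: "v = c \<cdot>\<^sub>v u" unfolding L_def by auto
    obtain k where k: "\<forall>w\<in>carrier_vec d. \<rho> f *\<^sub>v w = k \<cdot>\<^sub>v w" using scal[OF f] by blast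
    have "\<rho> f *\<^sub>v v = (c * k) \<cdot>\<^sub>v u" using c k uc car[OF f]
      by (simp add: mult_mat_vec smult_smult_assoc mult.commute)
    then show "\<rho> f *\<^sub>v v \<in> L" unfolding L_def by auto
  qed
  then have "L = {0\<^sub>v d} \<or> L = carrier_vec d" by (rule simp_inv)
  moreover have "u \<in> L" unfolding L_def by (auto intro!: exI[of _ 1])
  moreover have "u \<noteq> 0\<^sub>v d" unfolding u_def using d by simp
  ultimately have L: "L = carrier_vec d" by auto
  show "d = 1"
  proof (rule ccontr)
    assume "d \<noteq> 1"
    then have d1: "1 < d" using d by simp
    have "unit_vec d 1 \<in> L" using L by simp
    then obtain c where "unit_vec d 1 = c \<cdot>\<^sub>v u" unfolding L_def by auto
    then have "unit_vec d 1 $ 1 = (c \<cdot>\<^sub>v u) $ 1" by simp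
    then show False using d1 unfolding u_def by simp
  qed
qed
definition beta :: "('g \<Rightarrow> 'g \<Rightarrow> 'g \<Rightarrow> 'k::field) \<Rightarrow> 'g \<Rightarrow> 'g \<Rightarrow> 'g \<Rightarrow> 'k" where
  "beta \<Phi> g x y = Phi_tilde \<Phi> g x y / Phi_tilde \<Phi> g y x"

lemma smult_mat_vec:
  fixes A :: "'k::field mat"
  assumes "A \<in> carrier_mat d d" "v \<in> carrier_vec d"
  shows "(c \<cdot>\<^sub>m A) *\<^sub>v v = c \<cdot>\<^sub>v (A *\<^sub>v v)"
  using assms by (intro eq_vecI) (auto simp: scalar_prod_smult_left)

lemma nonzero_col:
  fixes vs :: "'k::field vec list"
  assumes "length vs = d" "set vs \<subseteq> carrier_vec d" "det (mat_of_cols d vs) \<noteq> 0" "j < d"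
  shows "vs ! j \<noteq> 0\<^sub>v d"
proof
  assume z: "vs ! j = 0\<^sub>v d"
  have M: "mat_of_cols d vs \<in> carrier_mat d d" using assms by auto
  have "mat_of_cols d vs *\<^sub>v unit_vec d j = 0\<^sub>v d"
    using assms z by (intro eq_vecI) (auto simp: mat_of_cols_def)
  moreover have "unit_vec d j \<noteq> (0\<^sub>v d :: 'k vec)" using assms(4) by simp
  ultimately have "det (mat_of_cols d vs) = 0"
    using det_0_iff_vec_prod_zero_field[OF M] by (metis unit_vec_carrier)
  then show False using assms(3) by simp
qed

lemma Phi_tilde_nz:
  assumes N: "normalized_3cocycle G \<Phi>" "g \<in> carrier G" "x \<in> carrier G" "y \<in> carrier G"
  shows "Phi_tilde \<Phi> g x y \<noteq> 0"
  using assms unfolding normalized_3cocycle_def Phi_tilde_def by auto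

lemma (in comm_group) diag_triv:
  fixes \<rho> :: "'a \<Rightarrow> 'k::field mat"
  assumes N: "normalized_3cocycle G \<Phi>" and S: "simple_obj G \<Phi> g d \<rho>"
    and D: "diagonal_type G d \<rho>" and e: "e \<in> carrier G" and f: "f \<in> carrier G"
  shows "beta \<Phi> g e f = 1"
proof -
  have d: "d \<noteq> 0" using S unfolding simple_obj_def by simp
  have H: "homog_obj G \<Phi> g d \<rho>" using S unfolding simple_obj_def by simp
  have gc: "g \<in> carrier G" using H unfolding homog_obj_def by simp
  have car: "\<And>e. e \<in> carrier G \<Longrightarrow> \<rho> e \<in> carrier_mat d d"
    using H unfolding homog_obj_def by blast
  have one: "\<rho> \<one> = 1\<^sub>m d" using H unfolding homog_obj_def by blast
  have mul: "\<And>e f. e \<in> carrier G \<Longrightarrow> f \<in> carrier G \<Longrightarrow>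
      \<rho> e * \<rho> f = Phi_tilde \<Phi> g e f \<cdot>\<^sub>m \<rho> (e \<otimes> f)"
    using H unfolding homog_obj_def by blast
  obtain vs where vs: "length vs = d" "set vs \<subseteq> carrier_vec d" "det (mat_of_cols d vs) \<noteq> 0"
    "\<forall>v\<in>set vs. \<forall>e\<in>carrier G. \<exists>c. \<rho> e *\<^sub>v v = c \<cdot>\<^sub>v v"
    using D unfolding diagonal_type_def by blast
  define v where "v = vs ! 0"
  have vin: "v \<in> set vs" unfolding v_def using vs(1) d by simp
  have vc: "v \<in> carrier_vec d" using vin vs(2) by auto
  have vnz: "v \<noteq> 0\<^sub>v d" unfolding v_def using nonzero_col[OF vs(1-3)] d by simp
  define cf where "cf e = (SOME c. \<rho> e *\<^sub>v v = c \<cdot>\<^sub>v v)" for e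
  have ev: "\<rho> e *\<^sub>v v = cf e \<cdot>\<^sub>v v" if "e \<in> carrier G" for e
    unfolding cf_def using vs(4) vin that by (metis (mono_tags, lifting) someI_ex)
  have key: "cf f * cf e = Phi_tilde \<Phi> g e f * cf (e \<otimes> f)"
    if e: "e \<in> carrier G" and f: "f \<in> carrier G" for e f
  proof -
    have "(\<rho> e * \<rho> f) *\<^sub>v v = (cf f * cf e) \<cdot>\<^sub>v v"
      using car[OF e] car[OF f] vc ev[OF e] ev[OF f]
      by (simp add: mult_mat_vec smult_smult_assoc)
    moreover have "(\<rho> e * \<rho> f) *\<^sub>v v = (Phi_tilde \<Phi> g e f * cf (e \<otimes> f)) \<cdot>\<^sub>v v"
      using mul[OF e f] smult_mat_vec[OF car[OF m_closed[OF e f]] vc] e f vc ev[of "e \<otimes> f"]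
      by (simp add: smult_smult_assoc)
    ultimately show ?thesis using scalar_line[OF vc vnz] by metis
  qed
  have cfnz: "cf k \<noteq> 0" if k: "k \<in> carrier G" for k
  proof
    assume "cf k = 0"
    moreover have "cf (inv k) * cf k = Phi_tilde \<Phi> g k (inv k) * cf (k \<otimes> inv k)"
      using key k by simp
    moreover have "cf (k \<otimes> inv k) = 1"
    proof -
      have "\<rho> (k \<otimes> inv k) *\<^sub>v v = 1 \<cdot>\<^sub>v v" using k one vc by simp
      then show ?thesis using ev[of "k \<otimes> inv k"] k scalar_line[OF vc vnz] by (metis m_closed inv_closed)
    qed
    ultimately show False using Phi_tilde_nz[OF N gc k inv_closed[OF k]] by simp
  qed
  have "Phi_tilde \<Phi> g e f * cf (e \<otimes> f) = Phi_tilde \<Phi> g f e * cf (e \<otimes> f)"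
    using key[OF e f] key[OF f e] m_comm[OF e f] by (metis mult.commute)
  then have "Phi_tilde \<Phi> g e f = Phi_tilde \<Phi> g f e" using cfnz[OF m_closed[OF e f]] by simp
  then show ?thesis unfolding beta_def using Phi_tilde_nz[OF N gc f e] by simp
qed

lemma (in monoid) cocy_inst:
  assumes "normalized_3cocycle G \<Phi>" "a \<in> carrier G" "b \<in> carrier G" "c \<in> carrier G" "d \<in> carrier G"
  shows "\<Phi> b c d * \<Phi> a (b \<otimes> c) d * \<Phi> a b c = \<Phi> (a \<otimes> b) c d * \<Phi> a b (c \<otimes> d)"
  using assms unfolding normalized_3cocycle_def by blast

lemma (in monoid) nz_inst:
  assumes "normalized_3cocycle G \<Phi>" "a \<in> carrier G" "b \<in> carrier G" "c \<in> carrier G"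
  shows "\<Phi> a b c \<noteq> 0"
  using assms unfolding normalized_3cocycle_def by blast

lemma (in monoid) norm_inst:
  assumes "normalized_3cocycle G \<Phi>" "a \<in> carrier G" "b \<in> carrier G"
  shows "\<Phi> \<one> a b = 1" "\<Phi> a \<one> b = 1" "\<Phi> a b \<one> = 1"
  using assms unfolding normalized_3cocycle_def by blast+

lemma (in comm_group) beta_mult2:
  fixes \<Phi> :: "'a \<Rightarrow> 'a \<Rightarrow> 'a \<Rightarrow> 'k::field"
  assumes N: "normalized_3cocycle G \<Phi>" and C: "g \<in> carrier G" "x \<in> carrier G" "y \<in> carrier G" "z \<in> carrier G"
  shows "beta \<Phi> g (x \<otimes> y) z = beta \<Phi> g x z * beta \<Phi> g y z"
proof -
  note cocy = cocy_inst[OF N]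
  note nzs = nz_inst[OF N]
  have c0: "(\<Phi> x y z * \<Phi> g (x \<otimes> y) z * \<Phi> g x y) = (\<Phi> (g \<otimes> x) y z * \<Phi> g x (y \<otimes> z))" using cocy[of g x y z] using C by (simp add: m_ac)
  have c1: "(\<Phi> x z y * \<Phi> g (x \<otimes> z) y * \<Phi> g x z) = (\<Phi> (g \<otimes> x) z y * \<Phi> g x (y \<otimes> z))" using cocy[of g x z y] using C by (simp add: m_ac)
  have c2: "(\<Phi> z x y * \<Phi> g (x \<otimes> z) y * \<Phi> g z x) = (\<Phi> (g \<otimes> z) x y * \<Phi> g z (x \<otimes> y))" using cocy[of g z x y] using C by (simp add: m_ac)
  have c3: "(\<Phi> g y z * \<Phi> x (g \<otimes> y) z * \<Phi> x g y) = (\<Phi> (g \<otimes> x) y z * \<Phi> x g (y \<otimes> z))" using cocy[of x g y z] using C by (simp add: m_ac)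
  have c4: "(\<Phi> g z y * \<Phi> x (g \<otimes> z) y * \<Phi> x g z) = (\<Phi> (g \<otimes> x) z y * \<Phi> x g (y \<otimes> z))" using cocy[of x g z y] using C by (simp add: m_ac)
  have c5: "(\<Phi> y g z * \<Phi> x (g \<otimes> y) z * \<Phi> x y g) = (\<Phi> (x \<otimes> y) g z * \<Phi> x y (g \<otimes> z))" using cocy[of x y g z] using C by (simp add: m_ac)
  have c6: "(\<Phi> y z g * \<Phi> x (y \<otimes> z) g * \<Phi> x y z) = (\<Phi> (x \<otimes> y) z g * \<Phi> x y (g \<otimes> z))" using cocy[of x y z g] using C by (simp add: m_ac)
  have c7: "(\<Phi> z g y * \<Phi> x (g \<otimes> z) y * \<Phi> x z g) = (\<Phi> (x \<otimes> z) g y * \<Phi> x z (g \<otimes> y))" using cocy[of x z g y] using C by (simp add: m_ac)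
  have c8: "(\<Phi> z y g * \<Phi> x (y \<otimes> z) g * \<Phi> x z y) = (\<Phi> (x \<otimes> z) y g * \<Phi> x z (g \<otimes> y))" using cocy[of x z y g] using C by (simp add: m_ac)
  have c9: "(\<Phi> g x y * \<Phi> z (g \<otimes> x) y * \<Phi> z g x) = (\<Phi> (g \<otimes> z) x y * \<Phi> z g (x \<otimes> y))" using cocy[of z g x y] using C by (simp add: m_ac)
  have c10: "(\<Phi> x g y * \<Phi> z (g \<otimes> x) y * \<Phi> z x g) = (\<Phi> (x \<otimes> z) g y * \<Phi> z x (g \<otimes> y))" using cocy[of z x g y] using C by (simp add: m_ac)
  have c11: "(\<Phi> x y g * \<Phi> z (x \<otimes> y) g * \<Phi> z x y) = (\<Phi> (x \<otimes> z) y g * \<Phi> z x (g \<otimes> y))" using cocy[of z x y g] using C by (simp add: m_ac)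
  have XY: "(\<Phi> x y z * \<Phi> g (x \<otimes> y) z * \<Phi> g x y) * (\<Phi> (g \<otimes> x) z y * \<Phi> g x (y \<otimes> z)) * (\<Phi> z x y * \<Phi> g (x \<otimes> z) y * \<Phi> g z x) * (\<Phi> (g \<otimes> x) y z * \<Phi> x g (y \<otimes> z)) * (\<Phi> g z y * \<Phi> x (g \<otimes> z) y * \<Phi> x g z) * (\<Phi> y g z * \<Phi> x (g \<otimes> y) z * \<Phi> x y g) * (\<Phi> (x \<otimes> y) z g * \<Phi> x y (g \<otimes> z)) * (\<Phi> (x \<otimes> z) g y * \<Phi> x z (g \<otimes> y)) * (\<Phi> z y g * \<Phi> x (y \<otimes> z) g * \<Phi> x z y) * (\<Phi> (g \<otimes> z) x y * \<Phi> z g (x \<otimes> y)) * (\<Phi> x g y * \<Phi> z (g \<otimes> x) y * \<Phi> z x g) * (\<Phi> (x \<otimes> z) y g * \<Phi> z x (g \<otimes> y)) = (\<Phi> (g \<otimes> x) y z * \<Phi> g x (y \<otimes> z)) * (\<Phi> x z y * \<Phi> g (x \<otimes> z) y * \<Phi> g x z) * (\<Phi> (g \<otimes> z) x y * \<Phi> g z (x \<otimes> y)) * (\<Phi> g y z * \<Phi> x (g \<otimes> y) z * \<Phi> x g y) * (\<Phi> (g \<otimes> x) z y * \<Phi> x g (y \<otimes> z)) * (\<Phi> (x \<otimes> y) g z * \<Phi> x y (g \<otimes> z)) * (\<Phi> y z g * \<Phi> x (y \<otimes> z) g * \<Phi> x y z) * (\<Phi> z g y * \<Phi> x (g \<otimes>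 z) y * \<Phi> x z g) * (\<Phi> (x \<otimes> z) y g * \<Phi> x z (g \<otimes> y)) * (\<Phi> g x y * \<Phi> z (g \<otimes> x) y * \<Phi> z g x) * (\<Phi> (x \<otimes> z) g y * \<Phi> z x (g \<otimes> y)) * (\<Phi> x y g * \<Phi> z (x \<otimes> y) g * \<Phi> z x y)" by (simp only: c0 c1 c2 c3 c4 c5 c6 c7 c8 c9 c10 c11)
  have A: "beta \<Phi> g (x \<otimes> y) z = (beta \<Phi> g x z * beta \<Phi> g y z) * (((\<Phi> x y z * \<Phi> g (x \<otimes> y) z * \<Phi> g x y) * (\<Phi> (g \<otimes> x) z y * \<Phi> g x (y \<otimes> z)) * (\<Phi> z x y * \<Phi> g (x \<otimes> z) y * \<Phi> g z x) * (\<Phi> (g \<otimes> x) y z * \<Phi> x g (y \<otimes> z)) * (\<Phi> g z y * \<Phi> x (g \<otimes> z) y * \<Phi> x g z) * (\<Phi> y g z * \<Phi> x (g \<otimes> y) z * \<Phi> x y g) * (\<Phi> (x \<otimes> y) z g * \<Phi> x y (g \<otimes> z)) * (\<Phi> (x \<otimes> z) g y * \<Phi> x z (g \<otimes> y)) * (\<Phi> z y g * \<Phi> x (y \<otimes> z) g * \<Phi> x z y) * (\<Phi> (g \<otimes> z) x y * \<Phi> z g (x \<otimes> y)) * (\<Phi> x g y * \<Phi> z (g \<otimes> x) y * \<Phi> z x g) * (\<Phi> (x \<otimes> z) y g * \<Phi> z x (g \<otimes> y))) / ((\<Phi> (g \<otimes> x) y z * \<Phi> g x (y \<otimes> z)) *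 (\<Phi> x z y * \<Phi> g (x \<otimes> z) y * \<Phi> g x z) * (\<Phi> (g \<otimes> z) x y * \<Phi> g z (x \<otimes> y)) * (\<Phi> g y z * \<Phi> x (g \<otimes> y) z * \<Phi> x g y) * (\<Phi> (g \<otimes> x) z y * \<Phi> x g (y \<otimes> z)) * (\<Phi> (x \<otimes> y) g z * \<Phi> x y (g \<otimes> z)) * (\<Phi> y z g * \<Phi> x (y \<otimes> z) g * \<Phi> x y z) * (\<Phi> z g y * \<Phi> x (g \<otimes> z) y * \<Phi> x z g) * (\<Phi> (x \<otimes> z) y g * \<Phi> x z (g \<otimes> y)) * (\<Phi> g x y * \<Phi> z (g \<otimes> x) y * \<Phi> z g x) * (\<Phi> (x \<otimes> z) g y * \<Phi> z x (g \<otimes> y)) * (\<Phi> x y g * \<Phi> z (x \<otimes> y) g * \<Phi> z x y)))"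
    unfolding beta_def Phi_tilde_def using C by (simp add: nzs field_simps)
  show ?thesis using A XY using C by (simp add: nzs)
qed

lemma (in comm_group) beta_mult1:
  fixes \<Phi> :: "'a \<Rightarrow> 'a \<Rightarrow> 'a \<Rightarrow> 'k::field"
  assumes N: "normalized_3cocycle G \<Phi>" and C: "g \<in> carrier G" "h \<in> carrier G" "x \<in> carrier G" "y \<in> carrier G"
  shows "beta \<Phi> g x y * beta \<Phi> h x y = beta \<Phi> (g \<otimes> h) x y"
proof -
  note cocy = cocy_inst[OF N]
  note nzs = nz_inst[OF N]
  have c0: "(\<Phi> h x y * \<Phi> g (h \<otimes> x) y * \<Phi> g h x) = (\<Phi> (g \<otimes> h) x y * \<Phi> g h (x \<otimes> y))" using cocy[of g h x y] using C by (simp add: m_ac)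
  have c1: "(\<Phi> h y x * \<Phi> g (h \<otimes> y) x * \<Phi> g h y) = (\<Phi> (g \<otimes> h) y x * \<Phi> g h (x \<otimes> y))" using cocy[of g h y x] using C by (simp add: m_ac)
  have c2: "(\<Phi> x h y * \<Phi> g (h \<otimes> x) y * \<Phi> g x h) = (\<Phi> (g \<otimes> x) h y * \<Phi> g x (h \<otimes> y))" using cocy[of g x h y] using C by (simp add: m_ac)
  have c3: "(\<Phi> x y h * \<Phi> g (x \<otimes> y) h * \<Phi> g x y) = (\<Phi> (g \<otimes> x) y h * \<Phi> g x (h \<otimes> y))" using cocy[of g x y h] using C by (simp add: m_ac)
  have c4: "(\<Phi> y h x * \<Phi> g (h \<otimes> y) x * \<Phi> g y h) = (\<Phi> (g \<otimes> y) h x * \<Phi> g y (h \<otimes> x))" using cocy[of g y h x] using C by (simp add: m_ac)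
  have c5: "(\<Phi> y x h * \<Phi> g (x \<otimes> y) h * \<Phi> g y x) = (\<Phi> (g \<otimes> y) x h * \<Phi> g y (h \<otimes> x))" using cocy[of g y x h] using C by (simp add: m_ac)
  have c6: "(\<Phi> g h y * \<Phi> x (g \<otimes> h) y * \<Phi> x g h) = (\<Phi> (g \<otimes> x) h y * \<Phi> x g (h \<otimes> y))" using cocy[of x g h y] using C by (simp add: m_ac)
  have c7: "(\<Phi> g y h * \<Phi> x (g \<otimes> y) h * \<Phi> x g y) = (\<Phi> (g \<otimes> x) y h * \<Phi> x g (h \<otimes> y))" using cocy[of x g y h] using C by (simp add: m_ac)
  have c8: "(\<Phi> y g h * \<Phi> x (g \<otimes> y) h * \<Phi> x y g) = (\<Phi> (x \<otimes> y) g h * \<Phi> x y (g \<otimes> h))" using cocy[of x y g h] using C by (simp add: m_ac)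
  have c9: "(\<Phi> g h x * \<Phi> y (g \<otimes> h) x * \<Phi> y g h) = (\<Phi> (g \<otimes> y) h x * \<Phi> y g (h \<otimes> x))" using cocy[of y g h x] using C by (simp add: m_ac)
  have c10: "(\<Phi> g x h * \<Phi> y (g \<otimes> x) h * \<Phi> y g x) = (\<Phi> (g \<otimes> y) x h * \<Phi> y g (h \<otimes> x))" using cocy[of y g x h] using C by (simp add: m_ac)
  have c11: "(\<Phi> x g h * \<Phi> y (g \<otimes> x) h * \<Phi> y x g) = (\<Phi> (x \<otimes> y) g h * \<Phi> y x (g \<otimes> h))" using cocy[of y x g h] using C by (simp add: m_ac)
  have XY: "(\<Phi> h x y * \<Phi> g (h \<otimes> x) y * \<Phi> g h x) * (\<Phi> (g \<otimes> h) y x * \<Phi> g h (x \<otimes> y)) * (\<Phi> (g \<otimes> x) h y * \<Phi> g x (h \<otimes> y)) * (\<Phi> x y h * \<Phi> g (x \<otimes> y) h * \<Phi> g x y) * (\<Phi> y h x * \<Phi> g (h \<otimes> y) x * \<Phi> g y h) * (\<Phi> (g \<otimes> y) x h * \<Phi> g y (h \<otimes> x)) * (\<Phi> g h y * \<Phi> x (g \<otimes> h) y * \<Phi> x g h) * (\<Phi> (g \<otimes> x) y h * \<Phi> x g (h \<otimes> y)) * (\<Phi> y g h * \<Phi> x (g \<otimes> y) h * \<Phi> x y g) * (\<Phi> (g \<otimes> y) h x * \<Phi> y g (h \<otimes> x)) * (\<Phi> g x h * \<Phi> y (g \<otimes> x) h * \<Phi> y g x) * (\<Phi> (x \<otimes>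 y) g h * \<Phi> y x (g \<otimes> h)) = (\<Phi> (g \<otimes> h) x y * \<Phi> g h (x \<otimes> y)) * (\<Phi> h y x * \<Phi> g (h \<otimes> y) x * \<Phi> g h y) * (\<Phi> x h y * \<Phi> g (h \<otimes> x) y * \<Phi> g x h) * (\<Phi> (g \<otimes> x) y h * \<Phi> g x (h \<otimes> y)) * (\<Phi> (g \<otimes> y) h x * \<Phi> g y (h \<otimes> x)) * (\<Phi> y x h * \<Phi> g (x \<otimes> y) h * \<Phi> g y x) * (\<Phi> (g \<otimes> x) h y * \<Phi> x g (h \<otimes> y)) * (\<Phi> g y h * \<Phi> x (g \<otimes> y) h * \<Phi> x g y) * (\<Phi> (x \<otimes> y) g h * \<Phi> x y (g \<otimes> h)) * (\<Phi> g h x * \<Phi> y (g \<otimes> h) x * \<Phi> y g h) * (\<Phi> (g \<otimes> y) x h * \<Phi> y g (h \<otimes> x)) * (\<Phi> x g h * \<Phi> y (g \<otimes> x) h * \<Phi> y x g)" by (simp only: c0 c1 c2 c3 c4 c5 c6 c7 c8 c9 c10 c11)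
  have A: "beta \<Phi> g x y * beta \<Phi> h x y = (beta \<Phi> (g \<otimes> h) x y) * (((\<Phi> h x y * \<Phi> g (h \<otimes> x) y * \<Phi> g h x) * (\<Phi> (g \<otimes> h) y x * \<Phi> g h (x \<otimes> y)) * (\<Phi> (g \<otimes> x) h y * \<Phi> g x (h \<otimes> y)) * (\<Phi> x y h * \<Phi> g (x \<otimes> y) h * \<Phi> g x y) * (\<Phi> y h x * \<Phi> g (h \<otimes> y) x * \<Phi> g y h) * (\<Phi> (g \<otimes> y) x h * \<Phi> g y (h \<otimes> x)) * (\<Phi> g h y * \<Phi> x (g \<otimes> h) y * \<Phi> x g h) * (\<Phi> (g \<otimes> x) y h * \<Phi> x g (h \<otimes> y)) * (\<Phi> y g h * \<Phi> x (g \<otimes> y) h * \<Phi> x y g) * (\<Phi> (g \<otimes> y) h x * \<Phi> y g (h \<otimes> x)) * (\<Phi> g x h * \<Phi> y (g \<otimes> x) h * \<Phi> y g x) * (\<Phi> (x \<otimes> y) g h * \<Phi> y x (g \<otimes> h))) / ((\<Phi> (g \<otimes> h) x y * \<Phi> g h (x \<otimes> y)) * (\<Phi> h y x * \<Phi> g (h \<otimes> y) x * \<Phi> g h y) * (\<Phi> x h y * \<Phi> g (h \<otimes> x) y * \<Phi> g x h) * (\<Phi> (g \<otimes> x) y h * \<Phi> g x (h \<otimes> y)) * (\<Phi> (g \<otimes> y) h x * \<Phi> g y (h \<otimes> x)) * (\<Phi> y x h * \<Phi> g (x \<otimes> y) h * \<Phi> g y x) * (\<Phi> (g \<otimes> x)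 h y * \<Phi> x g (h \<otimes> y)) * (\<Phi> g y h * \<Phi> x (g \<otimes> y) h * \<Phi> x g y) * (\<Phi> (x \<otimes> y) g h * \<Phi> x y (g \<otimes> h)) * (\<Phi> g h x * \<Phi> y (g \<otimes> h) x * \<Phi> y g h) * (\<Phi> (g \<otimes> y) x h * \<Phi> y g (h \<otimes> x)) * (\<Phi> x g h * \<Phi> y (g \<otimes> x) h * \<Phi> y x g)))"
    unfolding beta_def Phi_tilde_def using C by (simp add: nzs field_simps)
  show ?thesis using A XY using C by (simp add: nzs)
qed


context comm_group
begin

lemma beta_swap:
  assumes N: "normalized_3cocycle G \<Phi>" and C: "g \<in> carrier G" "x \<in> carrier G" "y \<in> carrier G"
  shows "beta \<Phi> g x y * beta \<Phi> g y x = 1"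
  unfolding beta_def using Phi_tilde_nz[OF N C(1,2,3)] Phi_tilde_nz[OF N C(1,3,2)] by simp

lemma beta_1x:
  assumes N: "normalized_3cocycle G \<Phi>" and C: "x \<in> carrier G" "y \<in> carrier G"
  shows "beta \<Phi> \<one> x y = 1"
  unfolding beta_def Phi_tilde_def using C by (simp add: norm_inst[OF N])

lemma beta_g1:
  assumes N: "normalized_3cocycle G \<Phi>" and C: "g \<in> carrier G" "y \<in> carrier G"
  shows "beta \<Phi> g \<one> y = 1"
  unfolding beta_def Phi_tilde_def using C by (simp add: norm_inst[OF N])

lemma beta_gx1:
  assumes N: "normalized_3cocycle G \<Phi>" and C: "g \<in> carrier G" "y \<in> carrier G"
  shows "beta \<Phi> g y \<one> = 1"
  unfolding beta_def Phi_tilde_def using C by (simp add: norm_inst[OF N])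

lemma beta_diag:
  assumes N: "normalized_3cocycle G \<Phi>" and C: "g \<in> carrier G" "x \<in> carrier G"
  shows "beta \<Phi> g x x = 1"
  unfolding beta_def using Phi_tilde_nz[OF N C(1,2,2)] by simp

lemma beta_gg:
  assumes N: "normalized_3cocycle G \<Phi>" and C: "g \<in> carrier G" "y \<in> carrier G"
  shows "beta \<Phi> g g y = 1"
  unfolding beta_def Phi_tilde_def using C by (simp add: nz_inst[OF N])

lemma beta_alt12:
  assumes N: "normalized_3cocycle G \<Phi>" and C: "g \<in> carrier G" "x \<in> carrier G" "y \<in> carrier G"
  shows "beta \<Phi> g x y * beta \<Phi> x g y = 1"
proof -
  have "1 = beta \<Phi> (g \<otimes> x) (g \<otimes> x) y" using beta_gg[OF N] C by simp
  also have "\<dots> = beta \<Phi> g (g \<otimes> x) y * beta \<Phi> x (g \<otimes> x) y"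
    using beta_mult1[OF N] C by simp
  also have "\<dots> = (beta \<Phi> g g y * beta \<Phi> g x y) * (beta \<Phi> x g y * beta \<Phi> x x y)"
    using beta_mult2[OF N] C by simp
  also have "\<dots> = beta \<Phi> g x y * beta \<Phi> x g y"
    using beta_gg[OF N] beta_diag[OF N] C by simp
  finally show ?thesis by simp
qed

lemma beta_mult3:
  assumes N: "normalized_3cocycle G \<Phi>" and C: "g \<in> carrier G" "y \<in> carrier G" "z \<in> carrier G" "w \<in> carrier G"
  shows "beta \<Phi> g y (z \<otimes> w) = beta \<Phi> g y z * beta \<Phi> g y w"
proof -
  have a: "beta \<Phi> g y (z \<otimes> w) * (beta \<Phi> g z y * beta \<Phi> g w y) = 1"
    using beta_swap[OF N, of g y "z \<otimes> w"] beta_mult2[OF N, of g z w y] C by simp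
  have b: "beta \<Phi> g y z * beta \<Phi> g z y = 1" "beta \<Phi> g y w * beta \<Phi> g w y = 1"
    using beta_swap[OF N] C by auto
  from a b show ?thesis
    by (metis (no_types, lifting) mult.assoc mult.commute mult.left_neutral)
qed

lemma gen_one:
  fixes f :: "'a \<Rightarrow> 'k::field"
  assumes S: "S \<subseteq> carrier G" and f1: "f \<one> = 1"
    and fm: "\<And>u v. u \<in> carrier G \<Longrightarrow> v \<in> carrier G \<Longrightarrow> f (u \<otimes> v) = f u * f v"
    and fs: "\<And>s. s \<in> S \<Longrightarrow> f s = 1" and x: "x \<in> generate G S"
  shows "f x = 1"
  using x
proof (induction rule: generate.induct)
  case one then show ?case using f1 by simp
next
  case (incl h) then show ?case using fs by simp
next
  case (inv h)
  then have h: "h \<in> carrier G" using S by auto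
  have "1 = f (h \<otimes> inv h)" using h f1 by simp
  also have "\<dots> = f (inv h)" using fm[OF h inv_closed[OF h]] fs[OF inv.hyps] by simp
  finally show ?case by simp
next
  case (eng h1 h2)
  then show ?case using fm generate_in_carrier[OF S] by simp
qed

lemma kill:
  assumes N: "normalized_3cocycle G \<Phi>" and ab: "a \<in> carrier G" "b \<in> carrier G"
    and S: "S \<subseteq> carrier G"
    and gens: "\<forall>s\<in>S. s = a \<or> s = b \<or> (\<forall>e\<in>carrier G. \<forall>f\<in>carrier G. beta \<Phi> s e f = 1)"
    and xyz: "x \<in> generate G S" "y \<in> generate G S" "z \<in> generate G S"
  shows "beta \<Phi> x y z = 1"
proof -
  have Hc: "\<And>u. u \<in> generate G S \<Longrightarrow> u \<in> carrier G" using generate_in_carrier[OF S] by blast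
  have tr2: "beta \<Phi> y s z = 1" if "s \<in> carrier G" "y \<in> carrier G" "z \<in> carrier G"
    "\<forall>e\<in>carrier G. \<forall>f\<in>carrier G. beta \<Phi> s e f = 1" for s y z
    using beta_alt12[OF N, of s y z] that by simp
  have tr3: "beta \<Phi> y z s = 1" if "s \<in> carrier G" "y \<in> carrier G" "z \<in> carrier G"
    "\<forall>e\<in>carrier G. \<forall>f\<in>carrier G. beta \<Phi> s e f = 1" for s y z
    using beta_swap[OF N, of y s z] tr2[OF that] that by simp
  have R: "beta \<Phi> a b z = 1" if "z \<in> generate G S" for z
  proof (rule gen_one[OF S, of "\<lambda>z. beta \<Phi> a b z", OF _ _ _ that])
    show "beta \<Phi> a b \<one> = 1" using beta_gx1[OF N] ab by simp
    show "beta \<Phi> a b (u \<otimes> v) = beta \<Phi> a b u * beta \<Phi> a b v" if "u \<in> carrier G" "v \<in> carrier G" for u v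
      using beta_mult3[OF N] ab that by simp
    fix s assume s: "s \<in> S"
    then have sc: "s \<in> carrier G" using S by auto
    show "beta \<Phi> a b s = 1"
      using gens s
    proof (elim ballE)
      assume "s = a \<or> s = b \<or> (\<forall>e\<in>carrier G. \<forall>f\<in>carrier G. beta \<Phi> s e f = 1)"
      then show ?thesis
    proof (elim disjE)
      assume "s = a" then show ?thesis using beta_swap[OF N, of a b a] beta_gg[OF N, of a b] ab by simp
    next
      assume "s = b" then show ?thesis using beta_diag[OF N] ab by simp
    next
      assume "\<forall>e\<in>carrier G. \<forall>f\<in>carrier G. beta \<Phi> s e f = 1"
      then show ?thesis using tr3 sc ab by simp
    qed
    qed simp
  qed
  have Qa: "beta \<Phi> a y z = 1" if "y \<in> generate G S" "z \<in> generate G S" for y z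
  proof (rule gen_one[OF S, of "\<lambda>y. beta \<Phi> a y z", OF _ _ _ that(1)])
    have zc: "z \<in> carrier G" using Hc that by blast
    show "beta \<Phi> a \<one> z = 1" using beta_g1[OF N] ab zc by simp
    show "beta \<Phi> a (u \<otimes> v) z = beta \<Phi> a u z * beta \<Phi> a v z" if "u \<in> carrier G" "v \<in> carrier G" for u v
      using beta_mult2[OF N] ab that zc by simp
    fix s assume s: "s \<in> S"
    then have sc: "s \<in> carrier G" using S by auto
    show "beta \<Phi> a s z = 1"
      using gens s
    proof (elim ballE)
      assume "s = a \<or> s = b \<or> (\<forall>e\<in>carrier G. \<forall>f\<in>carrier G. beta \<Phi> s e f = 1)"
      then show ?thesis
    proof (elim disjE)
      assume "s = a" then show ?thesis using beta_gg[OF N] ab zc by simp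
    next
      assume "s = b" then show ?thesis using R that by simp
    next
      assume "\<forall>e\<in>carrier G. \<forall>f\<in>carrier G. beta \<Phi> s e f = 1"
      then show ?thesis using tr2 sc ab zc by simp
    qed
    qed simp
  qed
  have Qb: "beta \<Phi> b y z = 1" if "y \<in> generate G S" "z \<in> generate G S" for y z
  proof (rule gen_one[OF S, of "\<lambda>y. beta \<Phi> b y z", OF _ _ _ that(1)])
    have zc: "z \<in> carrier G" using Hc that by blast
    show "beta \<Phi> b \<one> z = 1" using beta_g1[OF N] ab zc by simp
    show "beta \<Phi> b (u \<otimes> v) z = beta \<Phi> b u z * beta \<Phi> b v z" if "u \<in> carrier G" "v \<in> carrier G" for u v
      using beta_mult2[OF N] ab that zc by simp
    fix s assume s: "s \<in> S"
    then have sc: "s \<in> carrier G" using S by auto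
    show "beta \<Phi> b s z = 1"
      using gens s
    proof (elim ballE)
      assume "s = a \<or> s = b \<or> (\<forall>e\<in>carrier G. \<forall>f\<in>carrier G. beta \<Phi> s e f = 1)"
      then show ?thesis
    proof (elim disjE)
      assume "s = a" then show ?thesis using beta_alt12[OF N, of b a z] R that ab zc by simp
    next
      assume "s = b" then show ?thesis using beta_gg[OF N] ab zc by simp
    next
      assume "\<forall>e\<in>carrier G. \<forall>f\<in>carrier G. beta \<Phi> s e f = 1"
      then show ?thesis using tr2 sc ab zc by simp
    qed
    qed simp
  qed
  show ?thesis
  proof (rule gen_one[OF S, of "\<lambda>x. beta \<Phi> x y z", OF _ _ _ xyz(1)])
    have yc: "y \<in> carrier G" "z \<in> carrier G" using Hc xyz by blast+
    show "beta \<Phi> \<one> y z = 1" using beta_1x[OF N] yc by simp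
    show "beta \<Phi> (u \<otimes> v) y z = beta \<Phi> u y z * beta \<Phi> v y z" if "u \<in> carrier G" "v \<in> carrier G" for u v
      using beta_mult1[OF N] that yc by simp
    fix s assume s: "s \<in> S"
    then have sc: "s \<in> carrier G" using S by auto
    show "beta \<Phi> s y z = 1"
      using gens s
    proof (elim ballE)
      assume "s = a \<or> s = b \<or> (\<forall>e\<in>carrier G. \<forall>f\<in>carrier G. beta \<Phi> s e f = 1)"
      then show ?thesis
    proof (elim disjE)
      assume "s = a" then show ?thesis using Qa xyz by simp
    next
      assume "s = b" then show ?thesis using Qb xyz by simp
    next
      assume "\<forall>e\<in>carrier G. \<forall>f\<in>carrier G. beta \<Phi> s e f = 1"
      then show ?thesis using yc by simp
    qed
    qed simp
  qed
qed

end

lemma card_le2: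
  assumes "finite A" "card A \<le> 2" shows "\<exists>p q. A \<subseteq> {p, q}"
proof -
  consider "card A = 0" | "card A = 1" | "card A = 2" using assms by linarith
  then show ?thesis
  proof cases
    case 1 then show ?thesis using assms by auto
  next
    case 2 then show ?thesis by (metis card_1_singletonE insert_subset subset_insertI)
  next
    case 3 then show ?thesis by (metis card_2_iff subset_refl)
  qed
qed

lemma beta_one_eq:
  assumes "beta \<Phi> g e f = 1" shows "Phi_tilde \<Phi> g e f = Phi_tilde \<Phi> g f e"
  using assms unfolding beta_def by (cases "Phi_tilde \<Phi> g f e = 0") auto

theorem proposition4p7:
  fixes G :: "'g monoid" and \<Phi> :: "'g \<Rightarrow> 'g \<Rightarrow> 'g \<Rightarrow> 'k::field_char_0"
    and n :: nat and deg :: "nat \<Rightarrow> 'g" and dim :: "nat \<Rightarrow> nat" and \<rho> :: "nat \<Rightarrow> 'g \<Rightarrow> 'k mat"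
    and H :: "'g set"
  assumes "alg_closed TYPE('k)"
    and "comm_group G" and "finite (carrier G)"
    and "normalized_3cocycle G \<Phi>"
    and "\<forall>i\<in>{1..n}. simple_obj G \<Phi> (deg i) (dim i) (\<rho> i)"
    and "H = generate G (deg ` {1..n})"
    and "\<not> abelian_3cocycle (G\<lparr>carrier := H\<rparr>) \<Phi>"
  shows "n \<ge> 3 \<and> card {i\<in>{1..n}. \<not> diagonal_type G (dim i) (\<rho> i)} \<ge> 3"
proof -
  note ac = assms(1) and CG = assms(2) and N = assms(4) and SO = assms(5) and Hdef = assms(6)
    and nab = assms(7)
  interpret comm_group G by (rule CG)
  define Bad where "Bad = {i\<in>{1..n}. \<not> diagonal_type G (dim i) (\<rho> i)}"
  have degc: "deg i \<in> carrier G" if "i \<in> {1..n}" for i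
    using SO that unfolding simple_obj_def homog_obj_def by blast
  have Sc: "deg ` {1..n} \<subseteq> carrier G" using degc by auto
  have triv: "\<forall>e\<in>carrier G. \<forall>f\<in>carrier G. beta \<Phi> (deg i) e f = 1"
    if "i \<in> {1..n}" "i \<notin> Bad" for i
  proof (intro ballI)
    fix e f assume "e \<in> carrier G" "f \<in> carrier G"
    moreover have "diagonal_type G (dim i) (\<rho> i)" using that unfolding Bad_def by blast
    ultimately show "beta \<Phi> (deg i) e f = 1"
      using diag_triv[OF N _ _] SO that by blast
  qed
  have fin: "finite Bad" unfolding Bad_def by simp
  show ?thesis
  proof (rule ccontr)
    assume neg: "\<not> ?thesis"
    have "card Bad \<le> 2"
    proof (cases "n \<ge> 3")
      case True then show ?thesis using neg unfolding Bad_def by simp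
    next
      case False
      have "card Bad \<le> card {1..n}" unfolding Bad_def by (rule card_mono) auto
      then show ?thesis using False by simp
    qed
    then obtain p q where pq: "Bad \<subseteq> {p, q}" using card_le2[OF fin] by blast
    define a where "a = (if p \<in> {1..n} then deg p else \<one>\<^bsub>G\<^esub>)"
    define b where "b = (if q \<in> {1..n} then deg q else \<one>\<^bsub>G\<^esub>)"
    have ab: "a \<in> carrier G" "b \<in> carrier G" unfolding a_def b_def using degc by auto
    have gens: "\<forall>s\<in>deg ` {1..n}. s = a \<or> s = b \<or> (\<forall>e\<in>carrier G. \<forall>f\<in>carrier G. beta \<Phi> s e f = 1)"
    proof
      fix s assume "s \<in> deg ` {1..n}"
      then obtain i where i: "i \<in> {1..n}" "s = deg i" by blast
      show "s = a \<or> s = b \<or> (\<forall>e\<in>carrier G. \<forall>f\<in>carrier G. beta \<Phi> s e f = 1)"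
      proof (cases "i \<in> Bad")
        case True
        then have "i = p \<or> i = q" using pq by blast
        then show ?thesis using i unfolding a_def b_def by auto
      next
        case False then show ?thesis using triv i by simp
      qed
    qed
    have allone: "beta \<Phi> x y z = 1" if "x \<in> H" "y \<in> H" "z \<in> H" for x y z
      using kill[OF N ab Sc gens] that Hdef by simp
    have "abelian_3cocycle (G\<lparr>carrier := H\<rparr>) \<Phi>"
      unfolding abelian_3cocycle_def
    proof (intro allI impI)
      fix g d and \<sigma> :: "'g \<Rightarrow> 'k mat"
      assume S: "simple_obj (G\<lparr>carrier := H\<rparr>) \<Phi> g d \<sigma>"
      then have hom: "homog_obj (G\<lparr>carrier := H\<rparr>) \<Phi> g d \<sigma>" unfolding simple_obj_def by simp
      have gH: "g \<in> H" using hom unfolding homog_obj_def by simp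
      have mul: "\<And>e f. e \<in> H \<Longrightarrow> f \<in> H \<Longrightarrow> \<sigma> e * \<sigma> f = Phi_tilde \<Phi> g e f \<cdot>\<^sub>m \<sigma> (e \<otimes>\<^bsub>G\<^esub> f)"
        using hom unfolding homog_obj_def by simp
      have Hc: "H \<subseteq> carrier G" using Hdef generate_incl[OF Sc] by simp
      show "d = 1"
      proof (rule LA[OF ac S])
        show "\<forall>e\<in>carrier (G\<lparr>carrier := H\<rparr>). \<forall>f\<in>carrier (G\<lparr>carrier := H\<rparr>). \<sigma> e * \<sigma> f = \<sigma> f * \<sigma> e"
        proof (intro ballI)
          fix e f assume "e \<in> carrier (G\<lparr>carrier := H\<rparr>)" "f \<in> carrier (G\<lparr>carrier := H\<rparr>)"
          then have ef: "e \<in> H" "f \<in> H" by auto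
          have "\<sigma> e * \<sigma> f = Phi_tilde \<Phi> g e f \<cdot>\<^sub>m \<sigma> (e \<otimes>\<^bsub>G\<^esub> f)" using mul ef by simp
          also have "\<dots> = Phi_tilde \<Phi> g f e \<cdot>\<^sub>m \<sigma> (f \<otimes>\<^bsub>G\<^esub> e)"
          proof -
            have "e \<in> carrier G" "f \<in> carrier G" using ef Hc by auto
            then have "e \<otimes>\<^bsub>G\<^esub> f = f \<otimes>\<^bsub>G\<^esub> e" by (rule m_comm)
            then show ?thesis using beta_one_eq[OF allone[OF gH ef]] by simp
          qed
          also have "\<dots> = \<sigma> f * \<sigma> e" using mul ef by simp
          finally show "\<sigma> e * \<sigma> f = \<sigma> f * \<sigma> e" .
        qed
      qed
    qed
    then show False using nab by simp
  qed
qed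

end
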